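(* For every positive integer $x$, $R(x)=1$ if and only if $M(x)\in\mathcal{N}$.
   Context: For a positive integer $x$, write $x=2^{k}x'$ with $x'$ odd, and define the reduced Collatz function $R(x)=(3x'+1)/2^{v}$, where $2^{v}$ is the largest power of $2$ dividing $3x'+1$ (so $R(x)=R(2^n x)$ for all $n\ge 0$). Define $M(x)=2^{-m}x$, where $m$ is the smallest natural number with $x<2^m$; thus $M(x)\in[1/2,1)$. For $n\ge 0$ let $y^*_n=(0.1\{01\}^n)_2$ in binary, where $\{01\}^n$ denotes $n$ consecutive repetitions of the block $01$ (so $y^*_0=1/2$, $y^*_1=5/8$, \dots), and let $\mathcal{N}=\{y^*_n:n\ge 0\}$. *)

theory Defs
  imports Complex_Main "HOL-Computational_Algebra.Primes"
begin

definition odd_part :: "nat \<Rightarrow> nat" where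
  "odd_part x = x div 2 ^ multiplicity (2::nat) x"

definition R :: "nat \<Rightarrow> nat" where
  "R x = (3 * odd_part x + 1) div 2 ^ multiplicity (2::nat) (3 * odd_part x + 1)"

definition M :: "nat \<Rightarrow> real" where
  "M x = real x / 2 ^ (LEAST m::nat. x < 2 ^ m)"

text \<open>y*_n = (0.1{01}^n)_2: binary digits 1 at positions 1,3,...,2n+1.\<close>
definition ystar :: "nat \<Rightarrow> real" where
  "ystar n = (\<Sum>j\<le>n. (1/2) ^ (2*j+1))"

definition NN :: "real set" where
  "NN = {ystar n | n. True}"

end

theory Submission
  imports Defs
begin

lemma mult2_odd: "odd (w::nat) \<Longrightarrow> multiplicity (2::nat) (2^k * w) = k"
  by (rule multiplicity_decomposeI) auto

lemma odd_part_odd: "odd (w::nat) \<Longrightarrow> odd_part (2^k * w) = w"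
  unfolding odd_part_def using mult2_odd by simp

lemma decomp:
  assumes "(y::nat) > 0"
  shows "y = 2 ^ multiplicity 2 y * odd_part y" "odd (odd_part y)"
proof -
  obtain z where z: "y = 2 ^ multiplicity 2 y * z" "\<not> 2 dvd z"
    using multiplicity_decompose'[of y 2] assms by auto
  then have "odd_part y = z" using odd_part_odd by (metis)
  with z show "y = 2 ^ multiplicity 2 y * odd_part y" "odd (odd_part y)" by auto
qed

lemma R_alt: "R x = odd_part (3 * odd_part x + 1)"
  unfolding R_def odd_part_def ..

definition T :: "nat \<Rightarrow> nat" where "T n = 4^(n+1) div 3"

lemma T_eq: "3 * T n + 1 = 4^(n+1)"
proof -
  have "(4::nat)^(n+1) mod 3 = 1"
  proof (induction n)
    case 0 then show ?case by simp
  next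
    case (Suc n)
    have "(4::nat)^(Suc n+1) = 4 * 4^(n+1)" by simp
    moreover have "(4 * 4^(n+1)) mod 3 = ((4 mod 3) * (4^(n+1) mod 3)) mod (3::nat)" by (rule mod_mult_eq[symmetric])
    ultimately show ?case using Suc by simp
  qed
  then show ?thesis unfolding T_def using div_mult_mod_eq[of "(4::nat)^(n+1)" 3] by simp
qed

lemma T_odd: "odd (T n)"
proof -
  have "even ((4::nat)^(n+1))" by simp
  then show ?thesis using T_eq[of n] by (metis even_add even_mult_iff odd_one)
qed

lemma T_bounds: "2^(2*n) \<le> T n" "T n < 2^(2*n+1)"
proof -
  have e: "(4::nat)^(n+1) = 4 * 2^(2*n)" by (simp add: power_mult)
  show "2^(2*n) \<le> T n" using T_eq[of n] e by linarith
  show "T n < 2^(2*n+1)" using T_eq[of n] e by simp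
qed

lemma ystar_rec: "ystar n * (3 * 2^(2*n+1)) = 4^(n+1) - 1"
proof (induction n)
  case 0 then show ?case by (simp add: ystar_def)
next
  case (Suc n)
  define P :: real where "P = 2^(2*n+1)"
  have P0: "P > 0" unfolding P_def by simp
  have e1: "(2::real)^(2*Suc n+1) = 4 * P" unfolding P_def by (simp add: power_add)
  have e2: "(1/2::real)^(2*Suc n+1) = 1 / (4 * P)" unfolding P_def by (simp add: power_add power_divide)
  have "ystar (Suc n) = ystar n + (1/2)^(2*Suc n+1)" unfolding ystar_def by (rule sum.atMost_Suc)
  then have "ystar (Suc n) * (3 * 2^(2*Suc n+1)) = (ystar n + 1/(4*P)) * (3 * (4 * P))"
    using e1 e2 by simp
  also have "\<dots> = 4 * (ystar n * (3 * P)) + 3" using P0 by (simp add: algebra_simps)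
  also have "\<dots> = 4 * (4^(n+1) - 1) + 3" using Suc unfolding P_def by simp
  also have "\<dots> = 4^(Suc n+1) - 1" by simp
  finally show ?case .
qed

lemma ystar_T: "ystar n = real (T n) / 2^(2*n+1)"
proof -
  have "real (3 * T n + 1) = real (4^(n+1))" using T_eq[of n] by presburger
  then have h: "3 * real (T n) = 4^(n+1) - 1" by simp
  have "ystar n * 2^(2*n+1) = real (T n)" using ystar_rec[of n] h by simp
  then show ?thesis by (simp add: eq_divide_eq)
qed

lemma least_bits:
  assumes "2^k \<le> (x::nat)" "x < 2^(k+1)"
  shows "(LEAST m::nat. x < 2 ^ m) = k+1"
proof (rule Least_equality)
  show "x < 2^(k+1)" by fact
  fix m assume "x < (2::nat)^m"
  then have "(2::nat)^k < 2^m" using assms(1) by linarith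
  then show "k+1 \<le> m" by simp
qed

lemma pow2_mod3: "(2::nat)^(2*k+1) mod 3 = 2"
proof (induction k)
  case 0 then show ?case by simp
next
  case (Suc k)
  have "(2::nat)^(2*Suc k+1) = 4 * 2^(2*k+1)" by simp
  moreover have "(4 * 2^(2*k+1)) mod 3 = ((4 mod 3) * (2^(2*k+1) mod 3)) mod (3::nat)" by (rule mod_mult_eq[symmetric])
  ultimately show ?case using Suc by simp
qed

theorem mainTheorem2:
  fixes x :: nat
  assumes "x > 0"
  shows "R x = 1 \<longleftrightarrow> M x \<in> NN"
proof -
  define a where "a = multiplicity 2 x"
  define w where "w = odd_part x"
  have xd: "x = 2^a * w" unfolding a_def w_def by (rule decomp(1)[OF assms])
  have oo: "odd w" unfolding w_def by (rule decomp(2)[OF assms])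
  show ?thesis
  proof
    assume "R x = 1"
    then have R1: "odd_part (3*w+1) = 1" using R_alt w_def by simp
    define v where "v = multiplicity 2 (3*w+1)"
    have d: "3*w+1 = 2^v * odd_part (3*w+1)" unfolding v_def by (rule decomp(1)) simp
    have yv: "3*w+1 = 2^v" using d[unfolded R1] by simp
    have "even v"
    proof (rule ccontr)
      assume "odd v"
      then obtain k where "v = 2*k+1" using oddE by blast
      then have "(3*w+1) mod 3 = 2" using yv pow2_mod3 by simp
      then show False by simp
    qed
    then obtain k where vk: "v = 2*k" by blast
    have "k \<noteq> 0"
    proof
      assume "k = 0"
      then have "3*w+1 = 1" using yv vk by simp
      then show False using oo by simp
    qed
    then obtain n where kn: "k = n+1" by (metis Suc_eq_plus1 not0_implies_Suc)
    have "3*w+1 = 3 * T n + 1" using yv vk kn T_eq[of n] by (simp add: power_mult)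
    then have oT: "w = T n" by simp
    have b1: "2^(a+2*n) \<le> x" using xd oT T_bounds(1)[of n] by (simp add: power_add)
    have b2: "x < 2^(a+2*n+1)" using xd oT T_bounds(2)[of n] by (simp add: power_add)
    have L: "(LEAST m::nat. x < 2 ^ m) = a+2*n+1" using least_bits[OF b1 b2] by simp
    have "M x = real (2^a * T n) / 2^(a+2*n+1)" unfolding M_def L using xd oT by simp
    also have "\<dots> = real (T n) / 2^(2*n+1)" by (simp add: power_add)
    also have "\<dots> = ystar n" by (simp add: ystar_T)
    finally show "M x \<in> NN" unfolding NN_def by blast
  next
    assume "M x \<in> NN"
    then obtain n where "M x = ystar n" unfolding NN_def by blast
    define m where "m = (LEAST m::nat. x < 2 ^ m)"
    have "real x / 2^m = real (T n) / 2^(2*n+1)" using \<open>M x = ystar n\<close> ystar_T unfolding M_def m_def by simp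
    then have "real x * 2^(2*n+1) = real (T n) * 2^m" by (simp add: field_simps)
    then have "real (x * 2^(2*n+1)) = real (T n * 2^m)" by simp
    then have "x * 2^(2*n+1) = T n * 2^m" by (simp only: of_nat_eq_iff)
    then have eq: "2^(a+2*n+1) * w = 2^m * T n" using xd by (simp add: power_add mult_ac)
    have "multiplicity 2 (2^(a+2*n+1) * w) = multiplicity 2 (2^m * T n)" using eq by simp
    then have "a+2*n+1 = m" by (simp only: mult2_odd[OF oo] mult2_odd[OF T_odd])
    then have "w = T n" using eq by simp
    then have "R x = odd_part (2^(2*(n+1)) * 1)" using R_alt w_def T_eq[of n] by (simp add: power_mult)
    also have "\<dots> = 1" by (rule odd_part_odd) simp
    finally show "R x = 1" .
  qed
qed

end
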